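(* Let $k>l>0$ be coprime integers, $\lambda=\lambda_{k,l}$, and let $$T=\begin{pmatrix}1&k(1+\lambda)\\0&1\end{pmatrix},\qquad R=\begin{pmatrix}-1&-1\\1&0\end{pmatrix}.$$ Then the group $G=\langle R,T\rangle\subseteq \mathrm{PSL}(2,\mathbb{R})$ is discrete. Moreover, $$F=\{z\in\mathbb{H}:\ -2<\operatorname{Re}z<k(1+\lambda)-2,\ |z|>1,\ |z+1|>1\}$$ is a fundamental domain for the action of $G$ on $\mathbb{H}$ by Möbius transformations.
   Context: For coprime integers $k>l>0$, $\lambda_{k,l}$ denotes the positive solution of $k(\lambda+1)=l(\lambda^{-1}+1+\lambda)$. $\mathbb{H}$ is the upper half-plane. *)

theory Defs
  imports "HOL-Analysis.Analysis"
begin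

definition lambda_kl :: "int \<Rightarrow> int \<Rightarrow> real" where
  "lambda_kl k l = (THE x. x > 0 \<and> real_of_int k * (x + 1) = real_of_int l * (inverse x + 1 + x))"

definition upper_half_plane :: "complex set" where
  "upper_half_plane = {z. Im z > 0}"

definition mat2 :: "real \<Rightarrow> real \<Rightarrow> real \<Rightarrow> real \<Rightarrow> real^2^2" where
  "mat2 a b c d = (\<chi> i j. if i = 1 then (if j = 1 then a else b) else (if j = 1 then c else d))"

definition mobius :: "real^2^2 \<Rightarrow> complex \<Rightarrow> complex" where
  "mobius A z = (of_real (A$1$1) * z + of_real (A$1$2)) / (of_real (A$2$1) * z + of_real (A$2$2))"

inductive_set gen_group :: "(real^2^2) set \<Rightarrow> (real^2^2) set" for S where
  gen_one: "mat 1 \<in> gen_group S"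
| gen_mul: "g \<in> gen_group S \<Longrightarrow> s \<in> S \<Longrightarrow> g ** s \<in> gen_group S"
| gen_inv: "g \<in> gen_group S \<Longrightarrow> s \<in> S \<Longrightarrow> g ** matrix_inv s \<in> gen_group S"

text \<open>A set H of SL(2,R) matrices is discrete as a subset of PSL(2,R) = SL(2,R)/{+-I}:
  every class \<open>\<plusminus>g\<close> has a neighbourhood containing no other class of H.\<close>
definition discrete_in_PSL :: "(real^2^2) set \<Rightarrow> bool" where
  "discrete_in_PSL H \<longleftrightarrow> (\<forall>g\<in>H. \<exists>e>0. \<forall>h\<in>H.
      (dist h g < e \<or> dist h (- g) < e) \<longrightarrow> (h = g \<or> h = - g))"

definition fundamental_domain :: "(real^2^2) set \<Rightarrow> complex set \<Rightarrow> bool" where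
  "fundamental_domain G F \<longleftrightarrow>
     open F \<and> F \<subseteq> upper_half_plane \<and>
     upper_half_plane \<subseteq> (\<Union>g\<in>G. mobius g ` (closure F \<inter> upper_half_plane)) \<and>
     (\<forall>g\<in>G. g \<noteq> mat 1 \<and> g \<noteq> - mat 1 \<longrightarrow> mobius g ` F \<inter> F = {})"

end

theory Submission
  imports Defs
begin


lemma mat2_nth: "mat2 a b c d $1$1 = a" "mat2 a b c d $1$2 = b" "mat2 a b c d $2$1 = c" "mat2 a b c d $2$2 = d"
  by (simp_all add: mat2_def)

lemma mat2_eta: "(A::real^2^2) = mat2 (A$1$1) (A$1$2) (A$2$1) (A$2$2)"
  by (simp add: mat2_def vec_eq_iff forall_2)

lemma mat2_eq_iff: "mat2 a b c d = mat2 a' b' c' d' \<longleftrightarrow> a = a' \<and> b = b' \<and> c = c' \<and> d = d'"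
  by (metis mat2_nth)

lemma mat2_mult: "mat2 a b c d ** mat2 p q r t = mat2 (a*p+b*r) (a*q+b*t) (c*p+d*r) (c*q+d*t)"
  by (simp add: mat2_def matrix_matrix_mult_def vec_eq_iff forall_2 sum_2)

lemma mat2_one: "mat 1 = mat2 1 0 0 1"
  by (simp add: mat2_def mat_def vec_eq_iff forall_2)

lemma mat2_uminus: "- mat2 a b c d = mat2 (-a) (-b) (-c) (-d)"
  by (simp add: mat2_def vec_eq_iff forall_2)

lemma det_mat2: "det (mat2 a b c d) = a*d - b*c"
  by (simp add: det_2 mat2_nth)

lemma mobius_mat2: "mobius (mat2 a b c d) z = (of_real a * z + of_real b) / (of_real c * z + of_real d)"
  by (simp add: mobius_def mat2_nth)

lemma matrix_inv_eqI:
  fixes A B :: "real^2^2"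
  assumes "A ** B = mat 1" "B ** A = mat 1"
  shows "matrix_inv A = B"
  unfolding matrix_inv_def
proof (rule some_equality)
  show "A ** B = mat 1 \<and> B ** A = mat 1" using assms by simp
  fix C assume "A ** C = mat 1 \<and> C ** A = mat 1"
  then have "C = C ** (A ** B)" using assms by simp
  also have "\<dots> = (C ** A) ** B" by (simp add: matrix_mul_assoc)
  finally show "C = B" using \<open>A ** C = mat 1 \<and> C ** A = mat 1\<close> by simp
qed

lemma denom_nz:
  assumes "Im z \<noteq> 0" "(c::real) * d' - c' * d \<noteq> 0 \<or> True" "\<not> (c = 0 \<and> d = 0)"
  shows "of_real c * z + of_real (d::real) \<noteq> 0"
proof
  assume "of_real c * z + of_real d = 0"
  then have "Im (of_real c * z + of_real d) = 0" "Re (of_real c * z + of_real d) = 0" by simp_all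
  then show False using assms by simp
qed

lemma Im_mobius:
  "Im ((of_real a * z + of_real b) / (of_real c * z + of_real d)) = (a*d - b*c) * Im z / ((c * Re z + d)^2 + (c * Im z)^2)"
  by (simp add: Im_divide cmod_power2 algebra_simps power2_eq_square)

lemma lin_nz:
  assumes "Im z \<noteq> 0" "\<not> (c = 0 \<and> d = 0)"
  shows "of_real c * z + of_real (d::real) \<noteq> 0"
proof
  assume "of_real c * z + of_real d = 0"
  then have "Im (of_real c * z + of_real d) = 0" "Re (of_real c * z + of_real d) = 0" by simp_all
  then show False using assms by simp
qed

lemma mobius_mat2_comp:
  assumes "Im z \<noteq> 0" "a*d - b*c \<noteq> 0" "p*t - q*r \<noteq> 0"
  shows "mobius (mat2 a b c d ** mat2 p q r t) z = mobius (mat2 a b c d) (mobius (mat2 p q r t) z)"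
proof -
  have D: "of_real r * z + of_real t \<noteq> 0" using assms(1,3) by (intro lin_nz) auto
  have E: "of_real (c*p+d*r) * z + of_real (c*q+d*t) \<noteq> 0"
  proof (rule lin_nz[OF assms(1)])
    show "\<not> (c*p+d*r = 0 \<and> c*q+d*t = 0)"
    proof
      assume h: "c*p+d*r = 0 \<and> c*q+d*t = 0"
      have "c * (p*t - q*r) = 0" using h by algebra
      moreover have "d * (p*t - q*r) = 0" using h by algebra
      ultimately have "c = 0" "d = 0" using assms(3) by auto
      then show False using assms(2) by simp
    qed
  qed
  have E': "of_real c * (of_real p * z + of_real q) + of_real d * (of_real r * z + of_real t) \<noteq> (0::complex)"
    using E by (simp add: algebra_simps)
  have gen: "\<And>A B C Dd u D::complex. D \<noteq> 0 \<Longrightarrow> C * u + Dd * D \<noteq> 0 \<Longrightarrow>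
     (A * (u / D) + B) / (C * (u / D) + Dd) = (A * u + B * D) / (C * u + Dd * D)"
  proof -
    fix A B C Dd u D :: complex assume "D \<noteq> 0" "C * u + Dd * D \<noteq> 0"
    then have "A * (u / D) + B = (A * u + B * D) / D" "C * (u / D) + Dd = (C * u + Dd * D) / D"
      by (simp_all add: field_simps)
    then show "(A * (u / D) + B) / (C * (u / D) + Dd) = (A * u + B * D) / (C * u + Dd * D)"
      using \<open>D \<noteq> 0\<close> by simp
  qed
  have "mobius (mat2 a b c d) (mobius (mat2 p q r t) z) =
     (of_real a * (of_real p * z + of_real q) + of_real b * (of_real r * z + of_real t)) /
     (of_real c * (of_real p * z + of_real q) + of_real d * (of_real r * z + of_real t))"
    unfolding mobius_mat2 by (rule gen[OF D E'])
  then show ?thesis unfolding mat2_mult mobius_mat2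
    by (simp add: algebra_simps)
qed

lemma mobius_comp:
  fixes A B :: "real^2^2"
  assumes "Im z \<noteq> 0" "det A \<noteq> 0" "det B \<noteq> 0"
  shows "mobius (A ** B) z = mobius A (mobius B z)"
  using mobius_mat2_comp[OF assms(1), of "A$1$1" "A$2$2" "A$1$2" "A$2$1" "B$1$1" "B$2$2" "B$1$2" "B$2$1"]
    assms mat2_eta[of A] mat2_eta[of B] det_mat2 by metis



definition Tm :: "real \<Rightarrow> int \<Rightarrow> real^2^2" where "Tm w n = mat2 1 (of_int n * w) 0 1"
definition R0 :: "real^2^2" where "R0 = mat2 (-1) (-1) 1 0"
definition R2 :: "real^2^2" where "R2 = mat2 0 1 (-1) (-1)"
definition adj2 :: "real^2^2 \<Rightarrow> real^2^2" where
  "adj2 g = mat2 (g$2$2) (-(g$1$2)) (-(g$2$1)) (g$1$1)"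

lemma Tm_1: "Tm w 1 = mat2 1 w 0 1" by (simp add: Tm_def)
lemma Tm_0: "Tm w 0 = mat 1" by (simp add: Tm_def mat2_one)
lemma Tm_add: "Tm w a ** Tm w b = Tm w (a + b)"
  by (simp add: Tm_def mat2_mult algebra_simps)
lemma Tm_add': "Tm w a ** (Tm w b ** g) = Tm w (a + b) ** g"
  by (simp add: Tm_add matrix_mul_assoc)
lemma R_ids: "R0 ** R0 = R2" "R0 ** R2 = mat 1" "R2 ** R0 = mat 1" "R2 ** R2 = R0"
  by (simp_all add: R0_def R2_def mat2_mult mat2_one)
lemma R_ids': "R0 ** (R0 ** g) = R2 ** g" "R0 ** (R2 ** g) = g" "R2 ** (R0 ** g) = g" "R2 ** (R2 ** g) = R0 ** g"
  by (metis R_ids matrix_mul_assoc matrix_mul_lid)+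
lemma det_Tm: "det (Tm w n) = 1" by (simp add: Tm_def det_mat2)
lemma det_R: "det R0 = 1" "det R2 = 1" by (simp_all add: R0_def R2_def det_mat2)
lemma inv_R0: "matrix_inv R0 = R2" by (rule matrix_inv_eqI) (simp_all add: R_ids)
lemma inv_T: "matrix_inv (mat2 1 w 0 1) = Tm w (-1)"
  by (rule matrix_inv_eqI) (simp_all add: Tm_def mat2_mult mat2_one)

abbreviation GG :: "real \<Rightarrow> (real^2^2) set" where "GG w \<equiv> gen_group {R0, mat2 1 w 0 1}"

lemma GG_det: "g \<in> GG w \<Longrightarrow> det g = 1"
  by (induction rule: gen_group.induct) (auto simp: det_mul inv_R0 inv_T det_Tm det_R det_mat2 R0_def[symmetric])

lemma GG_left:
  assumes "x \<in> GG w" "s \<in> {R0, R2, Tm w 1, Tm w (-1)}"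
  shows "s ** x \<in> GG w"
  using assms(1)
proof (induction rule: gen_group.induct)
  case gen_one
  have "R0 = mat 1 ** R0" "R2 = mat 1 ** matrix_inv R0" "Tm w 1 = mat 1 ** mat2 1 w 0 1"
       "Tm w (-1) = mat 1 ** matrix_inv (mat2 1 w 0 1)"
    by (simp_all add: inv_R0 inv_T Tm_1)
  moreover have "mat 1 ** R0 \<in> GG w" "mat 1 ** mat2 1 w 0 1 \<in> GG w"
    by (rule gen_group.gen_mul[OF gen_group.gen_one]; simp)+
  moreover have "mat 1 ** matrix_inv R0 \<in> GG w" "mat 1 ** matrix_inv (mat2 1 w 0 1) \<in> GG w"
    by (rule gen_group.gen_inv[OF gen_group.gen_one]; simp)+
  ultimately show ?case using assms(2) by auto
next
  case (gen_mul g s')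
  then show ?case by (metis gen_group.gen_mul matrix_mul_assoc)
next
  case (gen_inv g s')
  then show ?case by (metis gen_group.gen_inv matrix_mul_assoc)
qed

lemma GG_mult:
  assumes "x \<in> GG w" "y \<in> GG w" shows "x ** y \<in> GG w"
  using assms(2)
proof (induction rule: gen_group.induct)
  case gen_one then show ?case using assms(1) by simp
next
  case (gen_mul g s') then show ?case by (metis gen_group.gen_mul matrix_mul_assoc)
next
  case (gen_inv g s') then show ?case by (metis gen_group.gen_inv matrix_mul_assoc)
qed

lemma adj2_mult: "adj2 (A ** B) = adj2 B ** adj2 A"
proof -
  have "adj2 (mat2 a b c d ** mat2 p q r t) = adj2 (mat2 p q r t) ** adj2 (mat2 a b c d)" for a b c d p q r t
    by (simp add: adj2_def mat2_mult mat2_nth algebra_simps)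
  then show ?thesis by (metis mat2_eta)
qed

lemma adj2_one: "adj2 (mat 1) = mat 1" by (simp add: adj2_def mat2_one mat2_nth)

lemma adj2_gens: "adj2 R0 = R2" "adj2 R2 = R0" "adj2 (mat2 1 w 0 1) = Tm w (-1)" "adj2 (Tm w (-1)) = Tm w 1"
  by (simp_all add: adj2_def R0_def R2_def Tm_def mat2_nth)

lemma GG_adj: "g \<in> GG w \<Longrightarrow> adj2 g \<in> GG w"
proof (induction rule: gen_group.induct)
  case gen_one then show ?case by (simp add: adj2_one gen_group.gen_one)
next
  case (gen_mul g s)
  then have "adj2 s \<in> {R0, R2, Tm w 1, Tm w (-1)}"
    using adj2_gens by auto
  then show ?case using gen_mul by (simp add: adj2_mult GG_left)
next
  case (gen_inv g s)
  then have "adj2 (matrix_inv s) \<in> {R0, R2, Tm w 1, Tm w (-1)}"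
    using adj2_gens inv_R0 inv_T by auto
  then show ?case using gen_inv by (simp add: adj2_mult GG_left)
qed

lemma adj2_inv: "det g = 1 \<Longrightarrow> matrix_inv g = adj2 g"
proof -
  assume "det g = 1"
  then have h: "g$1$1 * g$2$2 - g$1$2 * g$2$1 = 1" by (simp add: det_2)
  show ?thesis
    by (rule matrix_inv_eqI; subst mat2_eta[of g]; simp add: adj2_def mat2_mult mat2_one mat2_nth h algebra_simps;
        use h in argo)
qed

lemma GG_inv: "g \<in> GG w \<Longrightarrow> matrix_inv g \<in> GG w"
  using GG_adj GG_det adj2_inv by metis

lemma GG_R: "R0 \<in> GG w" "R2 \<in> GG w"
  using GG_left[OF gen_group.gen_one, of R0 w] GG_left[OF gen_group.gen_one, of R2 w] by auto

lemma GG_Tm: "Tm w n \<in> GG w"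
proof -
  have p: "Tm w (int m) \<in> GG w \<and> Tm w (- int m) \<in> GG w" for m
  proof (induction m)
    case 0 then show ?case by (simp add: Tm_0 gen_group.gen_one)
  next
    case (Suc m)
    have "Tm w (int (Suc m)) = Tm w 1 ** Tm w (int m)" "Tm w (- int (Suc m)) = Tm w (-1) ** Tm w (- int m)"
      by (simp_all add: Tm_add)
    then show ?case using Suc GG_left by auto
  qed
  show ?thesis
    by (cases "n \<ge> 0") (metis p nonneg_int_cases, metis p minus_minus nonneg_int_cases neg_0_le_iff_le nle_le)
qed



inductive nf :: "real \<Rightarrow> nat \<Rightarrow> real^2^2 \<Rightarrow> bool" for w where
  nf0: "nf w 0 (mat 1)"
| nfT: "nf w t g \<Longrightarrow> t \<noteq> 1 \<Longrightarrow> n \<noteq> 0 \<Longrightarrow> nf w 1 (Tm w n ** g)"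
| nfR: "nf w t g \<Longrightarrow> t \<noteq> 2 \<Longrightarrow> nf w 2 (R0 ** g)"
| nfR2: "nf w t g \<Longrightarrow> t \<noteq> 2 \<Longrightarrow> nf w 2 (R2 ** g)"

lemma nf_left:
  assumes "nf w t g" "s \<in> {R0, R2, Tm w 1, Tm w (-1)}"
  shows "\<exists>t'. nf w t' (s ** g)"
  using assms(1)
proof cases
  case nf0
  then show ?thesis using assms(2) nf.nf0[of w] nfT[of w 0 "mat 1" 1] nfT[of w 0 "mat 1" "-1"]
      nfR[of w 0 "mat 1"] nfR2[of w 0 "mat 1"] by auto
next
  case (nfT t' g' n)
  show ?thesis
  proof -
    { fix m :: int assume m: "m = 1 \<or> m = -1" "s = Tm w m"
      have "s ** g = Tm w (m + n) ** g'" using nfT m by (simp add: Tm_add')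
      then have ?thesis
        using nfT nf.nfT[of w t' g' "m+n"] by (cases "m + n = 0") (auto simp: Tm_0) }
    moreover have "s = R0 \<Longrightarrow> ?thesis" using nfR[OF assms(1)] nfT by auto
    moreover have "s = R2 \<Longrightarrow> ?thesis" using nfR2[OF assms(1)] nfT by auto
    ultimately show ?thesis using assms(2) by auto
  qed
next
  case (nfR t' g')
  have "s = Tm w 1 \<Longrightarrow> ?thesis" "s = Tm w (-1) \<Longrightarrow> ?thesis"
    using nf.nfT[OF assms(1), of 1] nf.nfT[OF assms(1), of "-1"] nfR by auto
  moreover have "s = R0 \<Longrightarrow> ?thesis" using nfR2[of w t' g'] nfR by (auto simp: R_ids')
  moreover have "s = R2 \<Longrightarrow> ?thesis" using nfR by (auto simp: R_ids')
  ultimately show ?thesis using assms(2) by auto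
next
  case (nfR2 t' g')
  have "s = Tm w 1 \<Longrightarrow> ?thesis" "s = Tm w (-1) \<Longrightarrow> ?thesis"
    using nf.nfT[OF assms(1), of 1] nf.nfT[OF assms(1), of "-1"] nfR2 by auto
  moreover have "s = R2 \<Longrightarrow> ?thesis" using nf.nfR[of w t' g'] nfR2 by (auto simp: R_ids')
  moreover have "s = R0 \<Longrightarrow> ?thesis" using nfR2 by (auto simp: R_ids')
  ultimately show ?thesis using assms(2) by auto
qed

lemma GG_nf: "g \<in> GG w \<Longrightarrow> \<exists>t. nf w t g"
proof -
  assume g: "g \<in> GG w"
  have "\<forall>h. (\<exists>t. nf w t h) \<longrightarrow> (\<exists>t. nf w t (g ** h))"
    using g
  proof (induction rule: gen_group.induct)
    case gen_one then show ?case by simp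
  next
    case (gen_mul g s)
    then have "s \<in> {R0, R2, Tm w 1, Tm w (-1)}" by (auto simp: Tm_1)
    then show ?case using gen_mul nf_left by (metis matrix_mul_assoc)
  next
    case (gen_inv g s)
    then have "matrix_inv s \<in> {R0, R2, Tm w 1, Tm w (-1)}" by (auto simp: inv_R0 inv_T)
    then show ?case using gen_inv nf_left by (metis matrix_mul_assoc)
  qed
  then show ?thesis using nf0[of w] by (metis matrix_mul_rid)
qed

definition Fw :: "real \<Rightarrow> complex set" where
  "Fw w = {z. Im z > 0 \<and> -2 < Re z \<and> Re z < w - 2 \<and> cmod z > 1 \<and> cmod (z + 1) > 1}"

lemma mobius_Tm: "mobius (Tm w n) u = u + of_real (of_int n * w)"
  by (simp add: Tm_def mobius_mat2)
lemma mobius_R0: "mobius R0 u = (- u - 1) / u"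
  by (simp add: R0_def mobius_mat2)
lemma mobius_R2: "mobius R2 u = 1 / (- u - 1)"
  by (simp add: R2_def mobius_mat2)

lemma cmod_gt1:
  assumes "w \<ge> 3" "Im u > 0" "u \<in> Fw w \<or> Re u < -2 \<or> Re u > w - 2"
  shows "cmod u > 1 \<and> cmod (u + 1) > 1"
proof -
  have a: "\<bar>Re u\<bar> \<le> cmod u" "\<bar>Re u + 1\<bar> \<le> cmod (u+1)" using abs_Re_le_cmod[of u] abs_Re_le_cmod[of "u+1"] by auto
  show ?thesis using assms a unfolding Fw_def by auto
qed

lemma R0_maps:
  assumes "Im u > 0" "cmod u > 1"
  shows "Im (mobius R0 u) > 0 \<and> cmod (mobius R0 u + 1) < 1"
proof -
  have u0: "u \<noteq> 0" using assms by auto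
  have e: "mobius R0 u + 1 = - (1 / u)" unfolding mobius_R0 using u0 by (simp add: field_simps)
  have "Im (mobius R0 u) = Im u / ((Re u)^2 + (Im u)^2)"
    using arg_cong[OF e, of Im] by (simp add: Im_divide power2_eq_square)
  moreover have "(Re u)^2 + (Im u)^2 > 0" using assms(1) by (simp add: add_nonneg_pos)
  moreover have "cmod (mobius R0 u + 1) = 1 / cmod u" using e by (simp add: norm_divide)
  ultimately show ?thesis using assms by (auto intro: divide_pos_pos simp: divide_less_eq)
qed

lemma R2_maps:
  assumes "Im u > 0" "cmod (u + 1) > 1"
  shows "Im (mobius R2 u) > 0 \<and> cmod (mobius R2 u) < 1"
proof -
  have u0: "u + 1 \<noteq> 0" using assms by auto
  have e: "mobius R2 u = - (1 / (u + 1))" unfolding mobius_R2 using u0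
  proof -
    have "- u - 1 = - (u + 1)" by simp
    then show "1 / (- u - 1) = - (1 / (u + 1))" by (simp only: divide_minus_right)
  qed
  have "Im (mobius R2 u) = Im (u+1) / ((Re (u+1))^2 + (Im (u+1))^2)"
    using arg_cong[OF e, of Im] by (simp add: Im_divide power2_eq_square)
  moreover have "(Re (u+1))^2 + (Im (u+1))^2 > 0" using assms(1) by (simp add: add_nonneg_pos)
  moreover have "cmod (mobius R2 u) = 1 / cmod (u+1)" using e by (simp add: norm_divide)
  ultimately show ?thesis using assms by (auto intro: divide_pos_pos simp: divide_less_eq)
qed



lemma det_nf: "nf w t g \<Longrightarrow> det g = 1"
  by (induction rule: nf.induct) (auto simp: det_mul det_Tm det_R)

lemma pingpong:
  assumes "nf w t g" "w \<ge> 3" "z \<in> Fw w"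
  shows "(t = 0 \<longrightarrow> g = mat 1) \<and>
         (t = 1 \<longrightarrow> Im (mobius g z) > 0 \<and> (Re (mobius g z) < -2 \<or> Re (mobius g z) > w - 2)) \<and>
         (t = 2 \<longrightarrow> Im (mobius g z) > 0 \<and> (cmod (mobius g z) < 1 \<or> cmod (mobius g z + 1) < 1))"
  using assms(1)
proof (induction rule: nf.induct)
  case nf0 then show ?case by simp
next
  case (nfT t g n)
  have z: "Im z > 0" using assms(3) by (simp add: Fw_def)
  have c: "mobius (Tm w n ** g) z = mobius (Tm w n) (mobius g z)"
    by (rule mobius_comp) (use z det_nf[OF nfT(1)] det_Tm in auto)
  define u where "u = mobius g z"
  have mz: "mobius (mat 1) z = z" by (simp add: mat2_one mobius_mat2)
  have u: "Im u > 0 \<and> -2 < Re u \<and> Re u < w - 2"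
  proof (cases "t = 0")
    case True then show ?thesis using nfT assms(3) mz unfolding u_def Fw_def by auto
  next
    case False
    from nfT.hyps(1) have "t = 0 \<or> t = 1 \<or> t = 2" by (cases rule: nf.cases) auto
    then have "t = 2" using nfT.hyps(2) False by auto
    then have h: "Im u > 0" "cmod u < 1 \<or> cmod (u + 1) < 1" using nfT.IH u_def by auto
    have "\<bar>Re u\<bar> \<le> cmod u" "\<bar>Re u + 1\<bar> \<le> cmod (u+1)"
      using abs_Re_le_cmod[of u] abs_Re_le_cmod[of "u+1"] by auto
    then show ?thesis using h assms(2) by auto
  qed
  have "n \<ge> 1 \<or> n \<le> -1" using nfT(3) by auto
  then have nw: "real_of_int n * w \<ge> w \<or> real_of_int n * w \<le> - w"
  proof
    assume "n \<ge> 1" then have "real_of_int n \<ge> 1" by simp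
    then show ?thesis using assms(2) by (metis mult_le_cancel_right1 order.trans linorder_not_le less_le_not_le dual_order.trans zero_le_numeral mult_right_mono mult_1 le_numeral_extra(4) mult.commute)
  next
    assume "n \<le> -1" then have "real_of_int n \<le> -1" by simp
    then have "real_of_int n * w \<le> -1 * w" using assms(2) by (intro mult_right_mono) auto
    then show ?thesis by simp
  qed
  have "Re (mobius (Tm w n ** g) z) = Re u + real_of_int n * w" "Im (mobius (Tm w n ** g) z) = Im u"
    using c unfolding u_def[symmetric] by (simp_all add: mobius_Tm)
  moreover have "Re u + real_of_int n * w > w - 2 \<or> Re u + real_of_int n * w < -2"
    using nw
  proof
    assume "real_of_int n * w \<ge> w" then show ?thesis using u by linarith
  next
    assume "real_of_int n * w \<le> - w" then show ?thesis using u by linarith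
  qed
  ultimately show ?case using u by auto
next
  case (nfR t g)
  have z: "Im z > 0" using assms(3) by (simp add: Fw_def)
  have c: "mobius (R0 ** g) z = mobius R0 (mobius g z)"
    by (rule mobius_comp) (use z det_nf[OF nfR(1)] det_R in auto)
  have mz: "mobius (mat 1) z = z" by (simp add: mat2_one mobius_mat2)
  define u where "u = mobius g z"
  have "Im u > 0 \<and> (u \<in> Fw w \<or> Re u < -2 \<or> Re u > w - 2)"
  proof (cases "t = 0")
    case True then show ?thesis using nfR assms(3) z mz unfolding u_def by auto
  next
    case False
    from nfR.hyps(1) have "t = 0 \<or> t = 1 \<or> t = 2" by (cases rule: nf.cases) auto
    then have "t = 1" using nfR.hyps(2) False by auto
    then show ?thesis using nfR.IH u_def by auto
  qed
  then have "Im u > 0" "cmod u > 1" using cmod_gt1[OF assms(2)] by auto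
  then show ?case using R0_maps c u_def by auto
next
  case (nfR2 t g)
  have z: "Im z > 0" using assms(3) by (simp add: Fw_def)
  have c: "mobius (R2 ** g) z = mobius R2 (mobius g z)"
    by (rule mobius_comp) (use z det_nf[OF nfR2(1)] det_R in auto)
  have mz: "mobius (mat 1) z = z" by (simp add: mat2_one mobius_mat2)
  define u where "u = mobius g z"
  have "Im u > 0 \<and> (u \<in> Fw w \<or> Re u < -2 \<or> Re u > w - 2)"
  proof (cases "t = 0")
    case True then show ?thesis using nfR2 assms(3) z mz unfolding u_def by auto
  next
    case False
    from nfR2.hyps(1) have "t = 0 \<or> t = 1 \<or> t = 2" by (cases rule: nf.cases) auto
    then have "t = 1" using nfR2.hyps(2) False by auto
    then show ?thesis using nfR2.IH u_def by auto
  qed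
  then have "Im u > 0" "cmod (u+1) > 1" using cmod_gt1[OF assms(2)] by auto
  then show ?case using R2_maps c u_def by auto
qed

lemma GG_disjoint:
  assumes "g \<in> GG w" "w \<ge> 3" "z \<in> Fw w"
  shows "g = mat 1 \<or> mobius g z \<notin> Fw w"
proof -
  obtain t where t: "nf w t g" using GG_nf[OF assms(1)] by auto
  have "t = 0 \<or> t = 1 \<or> t = 2" using t by (cases rule: nf.cases) auto
  then show ?thesis using pingpong[OF t assms(2,3)] unfolding Fw_def
    by (smt (verit) mem_Collect_eq)
qed



definition Cl :: "real \<Rightarrow> complex set" where
  "Cl w = {c. Im c > 0 \<and> -2 \<le> Re c \<and> Re c \<le> w - 2 \<and> cmod c \<ge> 1 \<and> cmod (c + 1) \<ge> 1}"

lemma growth: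
  fixes y0 a b N :: real
  assumes "y0 > 0" "b \<ge> y0" "a = b * N" "N = r^2 + a^2" "r^2 > 1"
  shows "a \<ge> b * (1 + y0^2)"
proof -
  have "N > 1" using assms(4,5) by (smt (verit) zero_le_power2)
  then have "a \<ge> b" using assms by (smt (verit) mult_le_cancel_left1)
  then have "a^2 \<ge> y0^2" using assms by (smt (verit) power_mono)
  then have "N \<ge> 1 + y0^2" using assms by linarith
  then show ?thesis using assms by (smt (verit) mult_left_mono)
qed

lemma comp3:
  assumes "Im c > 0" "det A = 1" "det B = 1" "det g = 1"
  shows "mobius (A ** (B ** g)) c = mobius A (mobius B (mobius g c))"
proof -
  have "Im (mobius g c) \<noteq> 0"
  proof -
    have "Im (mobius g c) = det g * Im c / ((g$2$1 * Re c + g$2$2)^2 + (g$2$1 * Im c)^2)"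
      unfolding mobius_def det_2 by (rule Im_mobius)
    moreover have "(g$2$1 * Re c + g$2$2)^2 + (g$2$1 * Im c)^2 \<noteq> 0"
    proof
      assume "(g$2$1 * Re c + g$2$2)^2 + (g$2$1 * Im c)^2 = 0"
      then have "g$2$1 * Im c = 0" "g$2$1 * Re c + g$2$2 = 0" by (smt (verit) zero_le_power2 power_eq_0_iff)+
      then have "g$2$1 = 0" "g$2$2 = 0" using assms(1) by auto
      then show False using assms(4) by (simp add: det_2)
    qed
    ultimately show ?thesis using assms by simp
  qed
  then show ?thesis using assms
    by (simp add: mobius_comp det_mul)
qed

lemma Im_ge_cmod: "Im z \<le> cmod z" using abs_Im_le_cmod[of z] by linarith

lemma reduce:
  assumes "w \<ge> 3"
  shows "\<exists>m z1. z = mobius (Tm w m) z1 \<and> Im z1 = Im z \<and> -2 \<le> Re z1 \<and> Re z1 < w - 2"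
proof -
  define m where "m = floor ((Re z + 2) / w)"
  have wp: "w > 0" using assms by simp
  have "of_int m \<le> (Re z + 2) / w" "(Re z + 2) / w < of_int m + 1" unfolding m_def by linarith+
  then have h: "of_int m * w \<le> Re z + 2" "Re z + 2 < of_int m * w + w" using wp
    by (simp_all add: field_simps)
  define z1 where "z1 = z - of_real (of_int m * w)"
  have "z = mobius (Tm w m) z1" unfolding mobius_Tm z1_def by simp
  moreover have "Im z1 = Im z" "Re z1 = Re z - of_int m * w" unfolding z1_def by simp_all
  ultimately show ?thesis using h by (intro exI[of _ m] exI[of _ z1]) auto
qed

lemma notCl:
  assumes "Im z1 > 0" "-2 \<le> Re z1" "Re z1 < w - 2" "z1 \<notin> Cl w"
  shows "cmod z1 < 1 \<or> cmod (z1 + 1) < 1"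
  using assms unfolding Cl_def by auto

lemma caseA:
  assumes w: "w \<ge> 3" and y0: "y0 > 0" and z1: "Im z1 \<ge> y0" "-1/2 \<le> Re z1"
    and n: "cmod z1 < 1 \<or> cmod (z1 + 1) < 1"
  shows "\<exists>u. z1 = mobius R2 u \<and> (u \<in> Cl w \<or> Im u \<ge> Im z1 * (1 + y0^2))"
proof -
  have c2: "(cmod (z1+1))^2 = (cmod z1)^2 + 2 * Re z1 + 1"
  proof -
    have a: "(cmod (z1+1))^2 = (Re z1 + 1)^2 + (Im z1)^2" by (simp add: cmod_power2)
    have b: "(cmod z1)^2 = (Re z1)^2 + (Im z1)^2" by (simp add: cmod_power2)
    have c: "(Re z1 + 1)^2 = (Re z1)^2 + 2*Re z1 + 1" by (simp add: power2_sum)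
    show ?thesis using a b c by linarith
  qed
  have ge: "cmod (z1 + 1) \<ge> cmod z1"
  proof -
    have "(cmod z1)^2 \<le> (cmod (z1+1))^2" using c2 z1 by linarith
    then show ?thesis by (rule power2_le_imp_le) simp
  qed
  have lt: "cmod z1 < 1" using n ge by linarith
  have z0: "z1 \<noteq> 0" using z1 y0 by auto
  define u where "u = mobius R0 z1"
  have ue: "u = (- z1 - 1) / z1" unfolding u_def mobius_R0 ..
  have u1: "u + 1 = - (1 / z1)" using z0 unfolding ue by (simp add: field_simps)
  have Imu: "Im u = Im z1 / (cmod z1)^2"
  proof -
    have "Im u = Im (u + 1)" by simp
    also have "\<dots> = Im z1 / (cmod z1)^2" unfolding u1 by (simp add: Im_divide cmod_power2)
    finally show ?thesis .
  qed
  have cu1: "cmod (u + 1) = 1 / cmod z1" using u1 by (simp add: norm_divide)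
  have cu: "cmod u = cmod (z1 + 1) / cmod z1"
  proof -
    have "- z1 - 1 = - (z1 + 1)" by simp
    then have "cmod (- z1 - 1) = cmod (z1 + 1)" by (simp only: norm_minus_cancel)
    then show ?thesis unfolding ue by (simp only: norm_divide)
  qed
  have cz: "cmod z1 > 0" using z0 by simp
  have cu1g: "cmod (u+1) > 1" using cu1 lt cz by (simp add: less_divide_eq)
  have cug: "cmod u \<ge> 1" using cu ge cz by (simp add: le_divide_eq)
  have Imp: "Im u > 0" using Imu z1 y0 cz by simp
  have bk: "z1 = mobius R2 u"
  proof -
    have "mobius (R2 ** R0) z1 = mobius R2 (mobius R0 z1)"
      by (rule mobius_comp) (use z1 y0 det_R in auto)
    then show ?thesis unfolding u_def R_ids by (simp add: mat2_one mobius_mat2)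
  qed
  show ?thesis
  proof (cases "u \<in> Cl w")
    case True then show ?thesis using bk by auto
  next
    case False
    then have r: "Re u < -2 \<or> Re u > w - 2" using Imp cu1g cug unfolding Cl_def by auto
    have r2: "(Re (u+1))^2 > 1"
    proof -
      have "\<bar>Re (u+1)\<bar> > 1" using r w by auto
      then have "1 < \<bar>Re (u+1)\<bar>^2" by (intro one_less_power) auto
      then show ?thesis by simp
    qed
    have N: "(cmod (u+1))^2 = (Re (u+1))^2 + (Im u)^2" by (simp add: cmod_power2)
    have "Im u = Im z1 * (cmod (u+1))^2" using Imu cu1 by (simp add: power_divide)
    then have "Im u \<ge> Im z1 * (1 + y0^2)"
      by (rule growth[OF y0 z1(1) _ N r2])
    then show ?thesis using bk by auto
  qed
qed

lemma caseB:
  assumes w: "w \<ge> 3" and y0: "y0 > 0" and z1: "Im z1 \<ge> y0" "Re z1 < -1/2"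
    and n: "cmod z1 < 1 \<or> cmod (z1 + 1) < 1"
  shows "\<exists>u. z1 = mobius R0 u \<and> (u \<in> Cl w \<or> Im u \<ge> Im z1 * (1 + y0^2))"
proof -
  have c2: "(cmod (z1+1))^2 = (cmod z1)^2 + 2 * Re z1 + 1"
  proof -
    have a: "(cmod (z1+1))^2 = (Re z1 + 1)^2 + (Im z1)^2" by (simp add: cmod_power2)
    have b: "(cmod z1)^2 = (Re z1)^2 + (Im z1)^2" by (simp add: cmod_power2)
    have c: "(Re z1 + 1)^2 = (Re z1)^2 + 2*Re z1 + 1" by (simp add: power2_sum)
    show ?thesis using a b c by linarith
  qed
  have ge: "cmod (z1 + 1) \<le> cmod z1"
  proof -
    have "(cmod (z1+1))^2 \<le> (cmod z1)^2" using c2 z1 by linarith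
    then show ?thesis by (rule power2_le_imp_le) simp
  qed
  have lt: "cmod (z1 + 1) < 1" using n ge by linarith
  have z0: "z1 + 1 \<noteq> 0" 
  proof
    assume "z1 + 1 = 0" then have "Im (z1 + 1) = 0" by simp
    then show False using z1 y0 by simp
  qed
  define u where "u = mobius R2 z1"
  have ue: "u = - (1 / (z1 + 1))" unfolding u_def mobius_R2
  proof -
    have "- z1 - 1 = - (z1 + 1)" by simp
    then show "1 / (- z1 - 1) = - (1 / (z1 + 1))" by (simp only: divide_minus_right)
  qed
  have u1: "u + 1 = z1 / (z1 + 1)" using z0 unfolding ue by (simp add: field_simps)
  have Imu: "Im u = Im z1 / (cmod (z1+1))^2"
    unfolding ue by (simp add: Im_divide cmod_power2)
  have cu: "cmod u = 1 / cmod (z1 + 1)" using ue by (simp add: norm_divide)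
  have cu1: "cmod (u + 1) = cmod z1 / cmod (z1 + 1)" using u1 by (simp add: norm_divide)
  have cz: "cmod (z1+1) > 0" using z0 by simp
  have cug: "cmod u > 1" using cu lt cz by (simp add: less_divide_eq)
  have cu1g: "cmod (u+1) \<ge> 1" using cu1 ge cz by (simp add: le_divide_eq)
  have Imp: "Im u > 0" using Imu z1 y0 cz by simp
  have bk: "z1 = mobius R0 u"
  proof -
    have "mobius (R0 ** R2) z1 = mobius R0 (mobius R2 z1)"
      by (rule mobius_comp) (use z1 y0 det_R in auto)
    then show ?thesis unfolding u_def R_ids by (simp add: mat2_one mobius_mat2)
  qed
  show ?thesis
  proof (cases "u \<in> Cl w")
    case True then show ?thesis using bk by auto
  next
    case False
    then have r: "Re u < -2 \<or> Re u > w - 2" using Imp cu1g cug unfolding Cl_def by auto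
    have r2: "(Re u)^2 > 1"
    proof -
      have "\<bar>Re u\<bar> > 1" using r w by auto
      then have "1 < \<bar>Re u\<bar>^2" by (intro one_less_power) auto
      then show ?thesis by simp
    qed
    have N: "(cmod u)^2 = (Re u)^2 + (Im u)^2" by (simp add: cmod_power2)
    have "Im u = Im z1 * (cmod u)^2" using Imu cu by (simp add: power_divide)
    then have "Im u \<ge> Im z1 * (1 + y0^2)"
      by (rule growth[OF y0 z1(1) _ N r2])
    then show ?thesis using bk by auto
  qed
qed



lemma mobius_id: "mobius (mat 1) z = z" by (simp add: mat2_one mobius_mat2)

lemma combine:
  assumes "z = mobius (Tm w m) z1" "z1 = mobius S u" "S \<in> GG w" "u = mobius g' c" "g' \<in> GG w" "c \<in> Cl w"
  shows "\<exists>g\<in>GG w. \<exists>c\<in>Cl w. z = mobius g c"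
proof -
  have "Im c > 0" using assms(6) by (simp add: Cl_def)
  then have "mobius (Tm w m ** (S ** g')) c = mobius (Tm w m) (mobius S (mobius g' c))"
    using comp3 GG_det assms det_Tm by blast
  moreover have "Tm w m ** (S ** g') \<in> GG w" using GG_mult GG_Tm assms by blast
  ultimately show ?thesis using assms by metis
qed

lemma cover_ind:
  assumes w: "w \<ge> 3" and y0: "y0 > 0"
  shows "\<forall>z. Im z \<ge> y0 \<longrightarrow> Im z * (1 + y0^2)^n \<ge> 1 \<longrightarrow> (\<exists>g\<in>GG w. \<exists>c\<in>Cl w. z = mobius g c)"
proof (induction n)
  case 0
  show ?case
  proof (intro allI impI)
    fix z :: complex assume z: "Im z \<ge> y0" "Im z * (1 + y0^2)^0 \<ge> 1"
    obtain m z1 where mz: "z = mobius (Tm w m) z1" "Im z1 = Im z" "-2 \<le> Re z1" "Re z1 < w - 2"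
      using reduce[OF w] by blast
    have "z1 \<in> Cl w"
    proof (rule ccontr)
      assume "z1 \<notin> Cl w"
      then have "cmod z1 < 1 \<or> cmod (z1 + 1) < 1" using notCl mz z y0 by auto
      moreover have "Im z1 \<le> cmod z1" "Im (z1 + 1) \<le> cmod (z1 + 1)" using Im_ge_cmod by blast+
      ultimately show False using z mz by auto
    qed
    then show "\<exists>g\<in>GG w. \<exists>c\<in>Cl w. z = mobius g c"
      using combine[OF mz(1) mobius_id[symmetric] gen_group.gen_one mobius_id[symmetric] gen_group.gen_one] by blast
  qed
next
  case (Suc n)
  show ?case
  proof (intro allI impI)
    fix z :: complex assume z: "Im z \<ge> y0" "Im z * (1 + y0^2)^Suc n \<ge> 1"
    obtain m z1 where mz: "z = mobius (Tm w m) z1" "Im z1 = Im z" "-2 \<le> Re z1" "Re z1 < w - 2"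
      using reduce[OF w] by blast
    show "\<exists>g\<in>GG w. \<exists>c\<in>Cl w. z = mobius g c"
    proof (cases "z1 \<in> Cl w")
      case True then show ?thesis
        using combine[OF mz(1) mobius_id[symmetric] gen_group.gen_one mobius_id[symmetric] gen_group.gen_one] by blast
    next
      case False
      then have cn: "cmod z1 < 1 \<or> cmod (z1 + 1) < 1" using notCl mz z y0 by auto
      have z1y: "Im z1 \<ge> y0" using z mz by simp
      have step: "\<exists>g\<in>GG w. \<exists>c\<in>Cl w. z = mobius g c"
        if S: "S \<in> GG w" and u: "z1 = mobius S u" "u \<in> Cl w \<or> Im u \<ge> Im z1 * (1 + y0^2)" for S u
      proof (cases "u \<in> Cl w")
        case True then show ?thesis
          using combine[OF mz(1) u(1) S mobius_id[symmetric] gen_group.gen_one] by blast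
      next
        case False
        then have iu: "Im u \<ge> Im z1 * (1 + y0^2)" using u by auto
        have p: "(1 + y0^2) \<ge> 1" by simp
        have "Im z1 * (1 + y0^2) \<ge> Im z1" using z1y y0 p by (simp add: mult_le_cancel_left1)
        then have "Im u \<ge> y0" using iu z1y by linarith
        moreover have "Im u * (1 + y0^2)^n \<ge> 1"
        proof -
          have "Im u * (1 + y0^2)^n \<ge> Im z1 * (1 + y0^2) * (1 + y0^2)^n"
            using iu by (simp add: mult_right_mono)
          also have "Im z1 * (1 + y0^2) * (1 + y0^2)^n = Im z * (1 + y0^2)^Suc n"
            using mz by simp
          finally show ?thesis using z by linarith
        qed
        ultimately obtain g' c where "g' \<in> GG w" "c \<in> Cl w" "u = mobius g' c" using Suc by blast
        then show ?thesis using combine[OF mz(1) u(1) S] by blast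
      qed
      show ?thesis
      proof (cases "Re z1 \<ge> -1/2")
        case True
        then show ?thesis using caseA[OF w y0 z1y True cn] step GG_R by blast
      next
        case False
        then have "Re z1 < -1/2" by simp
        then show ?thesis using caseB[OF w y0 z1y _ cn] step GG_R by blast
      qed
    qed
  qed
qed

lemma cover:
  assumes w: "w \<ge> 3" and z: "Im z > 0"
  shows "\<exists>g\<in>GG w. \<exists>c\<in>Cl w. z = mobius g c"
proof -
  have "1 < 1 + (Im z)^2" using z by simp
  then obtain n where "1 / Im z < (1 + (Im z)^2)^n" using real_arch_pow by blast
  then have "Im z * (1 + (Im z)^2)^n \<ge> 1" using z by (simp add: divide_less_eq mult.commute)
  then show ?thesis using cover_ind[OF w z, of n] by auto
qed



lemma sq_gt1: "1 < (Re y)^2 + (Im y)^2 \<Longrightarrow> 1 < cmod y"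
  by (metis cmod_power2 power_less_imp_less_base norm_ge_zero one_power2)

lemma Cl_closure:
  assumes w: "w \<ge> 3" and c: "c \<in> Cl w"
  shows "c \<in> closure (Fw w)"
  unfolding closure_approachable
proof (intro allI impI)
  fix e :: real assume e: "e > 0"
  have ci: "Im c > 0" "-2 \<le> Re c" "Re c \<le> w - 2" "cmod c \<ge> 1" "cmod (c+1) \<ge> 1"
    using c by (auto simp: Cl_def)
  have "1 \<le> (cmod c)^2" "1 \<le> (cmod (c+1))^2"
    using ci(4,5) power_mono[of 1 _ 2] by fastforce+
  then have cc: "(Re c)^2 + (Im c)^2 \<ge> 1" "(Re c + 1)^2 + (Im c)^2 \<ge> 1"
    by (simp_all add: cmod_power2)
  consider "-2 < Re c \<and> Re c < w - 2" | "Re c = -2" | "Re c = w - 2" using ci by linarith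
  then show "\<exists>y\<in>Fw w. dist y c < e"
  proof cases
    case 1
    define t where "t = e / 2"
    have t: "t > 0" "t < e" using e by (auto simp: t_def)
    define y where "y = c + \<i> * of_real t"
    have ry: "Re y = Re c" "Im y = Im c + t" by (simp_all add: y_def)
    have "(Im c + t)^2 > (Im c)^2" using t ci by (intro power_strict_mono) auto
    then have "1 < (Re y)^2 + (Im y)^2" "1 < (Re (y+1))^2 + (Im (y+1))^2" using cc ry by auto
    then have "cmod y > 1" "cmod (y+1) > 1" using sq_gt1 by blast+
    moreover have "dist y c = t" using t by (simp add: y_def dist_norm norm_mult)
    ultimately show ?thesis using ry 1 ci t unfolding Fw_def by (intro bexI[of _ y]) auto
  next
    case 2
    define t where "t = min (e/2) (min (1/2) ((Im c)^2/4))"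
    have t: "t > 0" "t < e" "t \<le> 1/2" "4 * t \<le> (Im c)^2" using e ci by (auto simp: t_def)
    define y where "y = c + of_real t"
    have ry: "Re y = -2 + t" "Im y = Im c" "Re (y + 1) = t - 1" "Im (y+1) = Im c" using 2 by (simp_all add: y_def)
    have a: "(Re y)^2 = 4 - 4*t + t^2" "(Re (y+1))^2 = 1 - 2*t + t^2"
      unfolding ry by (simp_all add: power2_eq_square algebra_simps)
    have "t^2 \<ge> 0" "(Im c)^2 \<ge> 0" by simp_all
    then have "1 < (Re y)^2 + (Im y)^2" "1 < (Re (y+1))^2 + (Im (y+1))^2" using a t
      unfolding ry(2,4) by linarith+
    then have "cmod y > 1" "cmod (y+1) > 1" using sq_gt1 by blast+
    moreover have "dist y c = t" using t by (simp add: y_def dist_norm)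
    ultimately show ?thesis using ry 2 ci t w unfolding Fw_def by (intro bexI[of _ y]) auto
  next
    case 3
    define t where "t = min (e/2) (min (1/2) ((Im c)^2/4))"
    have t: "t > 0" "t < e" "t \<le> 1/2" "4 * t \<le> (Im c)^2" using e ci by (auto simp: t_def)
    define y where "y = c - of_real t"
    have ry: "Re y = w - 2 - t" "Im y = Im c" "Re (y + 1) = w - 1 - t" "Im (y+1) = Im c" using 3 by (simp_all add: y_def)
    have b1: "(1 - t)^2 \<le> (Re y)^2" using t w ry by (intro power_mono) auto
    have b2: "(3/2)^2 \<le> (Re (y+1))^2" using t w ry by (intro power_mono) auto
    have b3: "(1 - t)^2 = 1 - 2*t + t^2" by (simp add: power2_eq_square algebra_simps)
    have b4: "t^2 \<ge> 0" "(Im c)^2 \<ge> 0" "(3/2::real)^2 = 9/4" by (simp_all add: power2_eq_square)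
    have "1 < (Re y)^2 + (Im y)^2" using b1 b3 b4 t unfolding ry(2) by linarith
    moreover have "1 < (Re (y+1))^2 + (Im (y+1))^2" using b2 b4 unfolding ry(4) by linarith
    ultimately have "1 < (Re y)^2 + (Im y)^2" "1 < (Re (y+1))^2 + (Im (y+1))^2" by blast+
    then have "cmod y > 1" "cmod (y+1) > 1" using sq_gt1 by blast+
    moreover have "dist y c = t" using t by (simp add: y_def dist_norm)
    ultimately show ?thesis using ry 3 ci t w unfolding Fw_def by (intro bexI[of _ y]) auto
  qed
qed

lemma open_Fw: "open (Fw w)"
proof -
  have "Fw w = {z. 0 < Im z} \<inter> {z. -2 < Re z} \<inter> {z. Re z < w - 2} \<inter> {z. 1 < cmod z} \<inter> {z. 1 < cmod (z + 1)}"
    unfolding Fw_def by auto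
  moreover have "open {z. 0 < Im z}" "open {z. -2 < Re z}" "open {z. Re z < w - 2}"
    "open {z. 1 < cmod z}" "open {z::complex. 1 < cmod (z + 1)}"
    by (intro open_Collect_less continuous_intros)+
  ultimately show ?thesis by auto
qed



lemma lam_eq_iff:
  fixes k l x :: real
  assumes "x > 0"
  shows "k * (x + 1) = l * (inverse x + 1 + x) \<longleftrightarrow> (k - l) * (x * (x + 1)) = l"
proof -
  have "k * (x + 1) = l * (inverse x + 1 + x) \<longleftrightarrow> x * (k * (x + 1)) = x * (l * (inverse x + 1 + x))"
    using assms by simp
  also have "x * (l * (inverse x + 1 + x)) = l + l * x + l * x * x"
    using assms by (simp add: field_simps)
  finally show ?thesis by (simp add: algebra_simps)
qed

lemma lambda_props:
  fixes k l :: int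
  assumes "k > l" "l > 0"
  shows "lambda_kl k l > 0 \<and> (real_of_int k - real_of_int l) * (lambda_kl k l * (lambda_kl k l + 1)) = real_of_int l"
proof -
  define a where "a = real_of_int l / (real_of_int k - real_of_int l)"
  have kl: "real_of_int k - real_of_int l > 0" using assms by simp
  have a: "a > 0" using assms kl by (simp add: a_def)
  define s where "s = sqrt (1 + 4 * a)"
  have s: "s > 1" using a by (simp add: s_def)
  have s2: "s^2 = 1 + 4 * a" using a by (simp add: s_def)
  define x0 where "x0 = (s - 1) / 2"
  have x0: "x0 > 0" using s by (simp add: x0_def)
  have "x0 * (x0 + 1) = (s^2 - 1) / 4" by (simp add: x0_def power2_eq_square field_simps)
  then have x0e: "x0 * (x0 + 1) = a" using s2 by simp
  let ?P = "\<lambda>x. x > 0 \<and> real_of_int k * (x + 1) = real_of_int l * (inverse x + 1 + x)"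
  have Pi: "?P x \<longleftrightarrow> x > 0 \<and> x * (x + 1) = a" for x
  proof (cases "x > 0")
    case True
    then show ?thesis using lam_eq_iff[OF True, of "real_of_int k" "real_of_int l"] kl
      by (auto simp: a_def field_simps)
  qed simp
  have ex: "\<exists>!x. ?P x"
  proof (rule ex1I[of _ x0])
    show "?P x0" by (rule Pi[THEN iffD2]) (use x0 x0e in simp)
    fix y assume "?P y"
    then have y: "y > 0" "y * (y + 1) = a" using Pi by auto
    have "(y - x0) * (y + x0 + 1) = 0" using y x0e by (simp add: algebra_simps)
    then show "y = x0" using y x0 by (simp add: add_pos_pos)
  qed
  have "?P (lambda_kl k l)" unfolding lambda_kl_def by (rule theI'[OF ex])
  then have L: "lambda_kl k l > 0" "lambda_kl k l * (lambda_kl k l + 1) = a" using Pi by blast+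
  have "(real_of_int k - real_of_int l) * a = real_of_int l" using kl by (simp add: a_def)
  then show ?thesis using L by simp
qed

lemma w_ge3:
  fixes k l :: int
  assumes "k > l" "l > 0"
  shows "real_of_int k * (1 + lambda_kl k l) \<ge> 3"
proof -
  have L: "lambda_kl k l > 0" "(real_of_int k - real_of_int l) * (lambda_kl k l * (lambda_kl k l + 1)) = real_of_int l"
    using lambda_props[OF assms] by auto
  show ?thesis
  proof (cases "k \<ge> 3")
    case True
    then have "real_of_int k \<ge> 3" by simp
    moreover have "1 + lambda_kl k l \<ge> 1" using L by simp
    moreover have "real_of_int k * 1 \<le> real_of_int k * (1 + lambda_kl k l)"
      using L True by (intro mult_left_mono) simp_all
    ultimately show ?thesis by linarith
  next
    case False
    then have "k = 2" "l = 1" using assms by auto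
    then have e: "lambda_kl k l * (lambda_kl k l + 1) = 1" using L by simp
    have "lambda_kl k l > 1/2"
    proof (rule ccontr)
      assume "\<not> lambda_kl k l > 1/2"
      then have "lambda_kl k l * (lambda_kl k l + 1) \<le> 1/2 * (1/2 + 1)"
        using L by (intro mult_mono) auto
      then show False using e by simp
    qed
    then show ?thesis using \<open>k = 2\<close> by simp
  qed
qed


lemma adj2_left: "det g = 1 \<Longrightarrow> adj2 g ** g = mat 1"
  by (subst (2) mat2_eta[of g]) (simp add: adj2_def mat2_mult mat2_one det_2 algebra_simps)
lemma adj2_right: "det g = 1 \<Longrightarrow> g ** adj2 g = mat 1"
  by (subst (1) mat2_eta[of g]) (simp add: adj2_def mat2_mult mat2_one det_2 algebra_simps mat2_nth)

lemma mobius_uminus: "mobius (- M) z = mobius M z"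
proof -
  have aux: "(of_real (-a) * z + of_real (-b)) / (of_real (-c) * z + of_real (-d)) = (of_real a * z + of_real b) / (of_real c * z + of_real d)" for a b c d :: real
  proof -
    have "of_real (-a) * z + of_real (-b) = - (of_real a * z + of_real b)" "of_real (-c) * z + of_real (-d) = - (of_real c * z + of_real d)" by simp_all
    then show ?thesis by (simp only: minus_divide_divide)
  qed
  have e1: "(-M)$i$j = - (M$i$j)" for i j by simp
  show ?thesis unfolding mobius_def e1 by (rule aux)
qed
lemma mult_uminus_right: "(A::real^2^2) ** (- (B::real^2^2)) = - (A ** B)"
proof -
  obtain a b c d where A: "A = mat2 a b c d" using mat2_eta by blast
  obtain p q r t where B: "B = mat2 p q r t" using mat2_eta by blast
  show ?thesis unfolding A B by (simp add: mat2_uminus mat2_mult)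
qed
lemma isCont_entry: "isCont (\<lambda>h::real^2^2. ((A::real^2^2) ** h) $ i $ j) g" 
    unfolding matrix_matrix_mult_def by (simp; intro continuous_intros; simp)
lemma isCont_mobius_mult:
  fixes A g :: "real^2^2"
  assumes "(A ** g)$2$1 * Re z0 + (A ** g)$2$2 \<noteq> 0 \<or> (A ** g)$2$1 * Im z0 \<noteq> 0"
  shows "isCont (\<lambda>h. mobius (A ** h) z0) g"
proof -
  have d: "of_real ((A ** g)$2$1) * z0 + of_real ((A ** g)$2$2) \<noteq> 0"
  proof
    assume "of_real ((A ** g)$2$1) * z0 + of_real ((A ** g)$2$2) = 0"
    then have "Re (of_real ((A ** g)$2$1) * z0 + of_real ((A ** g)$2$2)) = 0"
      "Im (of_real ((A ** g)$2$1) * z0 + of_real ((A ** g)$2$2)) = 0" by simp_all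
    then show False using assms by simp
  qed
  show ?thesis unfolding mobius_def
    by (intro continuous_intros isCont_entry d)
qed

lemma discrete_GG:
  assumes w: "w \<ge> 3"
  shows "discrete_in_PSL (GG w)"
  unfolding discrete_in_PSL_def
proof
  fix g assume g: "g \<in> GG w"
  define A where "A = adj2 g"
  have A: "A \<in> GG w" using GG_adj[OF g] by (simp add: A_def)
  have dg: "det g = 1" using GG_det[OF g] .
  have Ag: "A ** g = mat 1" "g ** A = mat 1" using adj2_left[OF dg] adj2_right[OF dg] by (simp_all add: A_def)
  define z0 :: complex where "z0 = Complex (-1/2) 2"
  have z0F: "z0 \<in> Fw w"
  proof -
    have "cmod z0 = sqrt (17/4)" "cmod (z0 + 1) = sqrt (17/4)"
      by (simp_all add: z0_def cmod_def power2_eq_square one_complex.code plus_complex.code)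
    moreover have "sqrt (17/4) > 1" by (simp add: real_less_rsqrt)
    ultimately show ?thesis using w by (simp add: Fw_def z0_def)
  qed
  define \<phi> where "\<phi> = (\<lambda>h. mobius (A ** h) z0)"
  have cont: "isCont \<phi> g" unfolding \<phi>_def by (rule isCont_mobius_mult) (simp add: Ag mat2_one mat2_nth)
  have phig: "\<phi> g = z0" by (simp add: \<phi>_def Ag mobius_id)
  obtain S where S: "open S" "g \<in> S" "\<forall>x\<in>S. \<phi> x \<in> Fw w"
    using cont[unfolded continuous_at_open] open_Fw z0F phig by metis
  obtain e where e: "e > 0" "ball g e \<subseteq> S" using S openE by metis
  have key: "h = g" if h: "h \<in> GG w" "\<phi> h \<in> Fw w" for h
  proof -
    have "A ** h \<in> GG w" using GG_mult A h by blast
    then have "A ** h = mat 1" using GG_disjoint[OF _ w z0F] h(2) unfolding \<phi>_def by blast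
    then have "g ** (A ** h) = g" by simp
    moreover have "g ** (A ** h) = h" by (metis matrix_mul_assoc Ag(2) matrix_mul_lid)
    ultimately show "h = g" by simp
  qed
  show "\<exists>e>0. \<forall>h\<in>GG w. (dist h g < e \<or> dist h (- g) < e) \<longrightarrow> h = g \<or> h = - g"
  proof (intro exI[of _ e] conjI ballI impI)
    show "e > 0" by fact
    fix h assume h: "h \<in> GG w" and d: "dist h g < e \<or> dist h (- g) < e"
    show "h = g \<or> h = - g"
    proof (cases "dist h g < e")
      case True
      then have "h \<in> S" using e by (auto simp: dist_commute)
      then show ?thesis using key h S by blast
    next
      case False
      then have "dist (- h) g < e" using d by (simp add: dist_norm norm_minus_commute add.commute)
      then have "- h \<in> S" using e by (auto simp: dist_commute)
      then have "\<phi> (- h) \<in> Fw w" using S by blast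
      then have "\<phi> h \<in> Fw w" by (simp add: \<phi>_def mult_uminus_right mobius_uminus)
      then show ?thesis using key h by blast
    qed
  qed
qed


theorem mainTheorem8:
  fixes k l :: int
  assumes "k > l" "l > 0" "coprime k l"
  defines "lam \<equiv> lambda_kl k l"
  defines "T \<equiv> mat2 1 (real_of_int k * (1 + lam)) 0 1"
  defines "R \<equiv> mat2 (-1) (-1) 1 0"
  defines "G \<equiv> gen_group {R, T}"
  defines "F \<equiv> {z \<in> upper_half_plane. -2 < Re z \<and> Re z < real_of_int k * (1 + lam) - 2
                  \<and> cmod z > 1 \<and> cmod (z + 1) > 1}"
  shows "discrete_in_PSL G \<and> fundamental_domain G F"
proof -
  define w where "w = real_of_int k * (1 + lam)"
  have w3: "w \<ge> 3" using w_ge3[OF assms(1,2)] by (simp add: w_def lam_def)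
  have GGe: "G = GG w" unfolding G_def R_def T_def w_def R0_def by simp
  have FFe: "F = Fw w" unfolding F_def Fw_def w_def upper_half_plane_def by auto
  have cov: "upper_half_plane \<subseteq> (\<Union>g\<in>GG w. mobius g ` (closure (Fw w) \<inter> upper_half_plane))"
  proof
    fix z assume "z \<in> upper_half_plane"
    then have "Im z > 0" by (simp add: upper_half_plane_def)
    then obtain g c where gc: "g \<in> GG w" "c \<in> Cl w" "z = mobius g c" using cover[OF w3] by blast
    have "c \<in> closure (Fw w)" using Cl_closure[OF w3 gc(2)] .
    moreover have "c \<in> upper_half_plane" using gc(2) by (simp add: Cl_def upper_half_plane_def)
    ultimately show "z \<in> (\<Union>g\<in>GG w. mobius g ` (closure (Fw w) \<inter> upper_half_plane))"
      using gc by blast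
  qed
  have disj: "\<forall>g\<in>GG w. g \<noteq> mat 1 \<and> g \<noteq> - mat 1 \<longrightarrow> mobius g ` Fw w \<inter> Fw w = {}"
    using GG_disjoint[OF _ w3] by blast
  have sub: "Fw w \<subseteq> upper_half_plane" unfolding Fw_def upper_half_plane_def by auto
  show ?thesis
    unfolding GGe FFe fundamental_domain_def
    using discrete_GG[OF w3] open_Fw sub cov disj by blast
qed

end
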